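(* Let $n,t$ be positive integers with $t\le n$, and let $a_1,\dots,a_m$ be positive integers, each at most $n/2$, with $a_1+\dots+a_m=t$. Then: (a) some subset of $\{a_1,\dots,a_m\}$ (as a multiset of terms) has sum between $t/3$ and $n/2$ inclusive; (b) if $t\ge n/4$, some subset of $\{a_1,\dots,a_m\}$ has sum between $n/4$ and $n/2$ inclusive. *)

theory Defs
  imports Main Complex_Main
begin

end

theory Submission
  imports Defs
begin

lemma prefix_hit:
  fixes a :: "nat \<Rightarrow> nat" and L c :: real
  assumes "\<And>i. i < m \<Longrightarrow> real (a i) < c"
    and "L \<le> real (\<Sum>i<m. a i)" and "0 < L"
  shows "\<exists>k\<le>m. L \<le> real (\<Sum>i<k. a i) \<and> real (\<Sum>i<k. a i) < L + c"
proof -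
  have "\<forall>k\<le>m. real (\<Sum>i<k. a i) < L \<or> (\<exists>j\<le>k. L \<le> real (\<Sum>i<j. a i) \<and> real (\<Sum>i<j. a i) < L + c)"
  proof (intro allI impI)
    fix k assume "k \<le> m"
    then show "real (\<Sum>i<k. a i) < L \<or> (\<exists>j\<le>k. L \<le> real (\<Sum>i<j. a i) \<and> real (\<Sum>i<j. a i) < L + c)"
    proof (induction k)
      case 0 then show ?case using assms(3) by simp
    next
      case (Suc k)
      then have ih: "real (\<Sum>i<k. a i) < L \<or> (\<exists>j\<le>k. L \<le> real (\<Sum>i<j. a i) \<and> real (\<Sum>i<j. a i) < L + c)" by simp
      have ak: "real (a k) < c" using assms(1) Suc.prems by simp
      show ?case
      proof (cases "real (\<Sum>i<k. a i) < L")
        case True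
        then have "real (\<Sum>i<Suc k. a i) < L + c" using ak by simp
        then show ?thesis by (metis le_refl not_le)
      next
        case False
        then show ?thesis using ih le_SucI by blast
      qed
    qed
  qed
  then show ?thesis using assms(2) by (meson le_refl not_le)
qed

theorem mainTheorem13:
  fixes n t m :: nat and a :: "nat \<Rightarrow> nat"
  assumes "0 < n" and "0 < t" and "t \<le> n"
    and "\<And>i. i < m \<Longrightarrow> 0 < a i"
    and "\<And>i. i < m \<Longrightarrow> real (a i) \<le> real n / 2"
    and "(\<Sum>i<m. a i) = t"
  shows "(\<exists>S \<subseteq> {..<m}. real t / 3 \<le> real (\<Sum>i\<in>S. a i) \<and> real (\<Sum>i\<in>S. a i) \<le> real n / 2)
       \<and> (real t \<ge> real n / 4 \<longrightarrow>
          (\<exists>S \<subseteq> {..<m}. real n / 4 \<le> real (\<Sum>i\<in>S. a i) \<and> real (\<Sum>i\<in>S. a i) \<le> real n / 2))"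
proof
  show "\<exists>S \<subseteq> {..<m}. real t / 3 \<le> real (\<Sum>i\<in>S. a i) \<and> real (\<Sum>i\<in>S. a i) \<le> real n / 2"
  proof (cases "\<exists>i<m. real t / 3 \<le> real (a i)")
    case True
    then obtain i where i: "i < m" "real t / 3 \<le> real (a i)" by blast
    show ?thesis by (rule exI[of _ "{i}"]) (use i assms(5)[OF i(1)] in auto)
  next
    case False
    then have h: "\<And>i. i < m \<Longrightarrow> real (a i) < real t / 3" by force
    have "\<exists>k\<le>m. real t / 3 \<le> real (\<Sum>i<k. a i) \<and> real (\<Sum>i<k. a i) < real t / 3 + real t / 3"
      by (rule prefix_hit[OF h]) (use assms(2,6) in auto)
    then obtain k where k: "k \<le> m" "real t / 3 \<le> real (\<Sum>i<k. a i)"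
      "real (\<Sum>i<k. a i) < real t / 3 + real t / 3" by auto
    have sub: "{..<k} \<subseteq> {..<m}" using k(1) by auto
    have cmp: "(\<Sum>i\<in>{..<m} - {..<k}. a i) = t - (\<Sum>i<k. a i)"
      using sum_diff_nat[OF _ sub, of a] assms(6) by simp
    have le: "(\<Sum>i<k. a i) \<le> t" using sum_mono2[OF _ sub, of a] assms(6) by simp
    show ?thesis
    proof (cases "real (\<Sum>i<k. a i) \<le> real n / 2")
      case True
      then show ?thesis using sub k by blast
    next
      case False
      have "real (\<Sum>i\<in>{..<m} - {..<k}. a i) = real t - real (\<Sum>i<k. a i)"
        using cmp le by simp
      moreover have "real t \<le> real n" using assms(3) by simp
      ultimately show ?thesis using False k
        by (intro exI[of _ "{..<m} - {..<k}"]) auto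
    qed
  qed
next
  show "real t \<ge> real n / 4 \<longrightarrow>
          (\<exists>S \<subseteq> {..<m}. real n / 4 \<le> real (\<Sum>i\<in>S. a i) \<and> real (\<Sum>i\<in>S. a i) \<le> real n / 2)"
  proof
    assume t4: "real t \<ge> real n / 4"
    show "\<exists>S \<subseteq> {..<m}. real n / 4 \<le> real (\<Sum>i\<in>S. a i) \<and> real (\<Sum>i\<in>S. a i) \<le> real n / 2"
    proof (cases "\<exists>i<m. real n / 4 \<le> real (a i)")
      case True
      then obtain i where i: "i < m" "real n / 4 \<le> real (a i)" by blast
      show ?thesis by (rule exI[of _ "{i}"]) (use i assms(5)[OF i(1)] in auto)
    next
      case False
      then have h: "\<And>i. i < m \<Longrightarrow> real (a i) < real n / 4" by force
      have "\<exists>k\<le>m. real n / 4 \<le> real (\<Sum>i<k. a i) \<and> real (\<Sum>i<k. a i) < real n / 4 + real n / 4"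
        by (rule prefix_hit[OF h]) (use assms(1,6) t4 in auto)
      then obtain k where k: "k \<le> m" "real n / 4 \<le> real (\<Sum>i<k. a i)"
        "real (\<Sum>i<k. a i) < real n / 4 + real n / 4" by auto
      have sub: "{..<k} \<subseteq> {..<m}" using k(1) by auto
      show ?thesis using sub k by (intro exI[of _ "{..<k}"]) auto
    qed
  qed
qed

end
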